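(* Let $H\le G$ be finite groups, $Y$ an irreducible unitary representation of $H$, $Y^{\uparrow}=\bigoplus_t t\otimes Y$ the induced unitary representation, $V$ a $G$-subrepresentation of $Y^{\uparrow}$, and $E$ the orthogonal projection onto $e\otimes Y$. Then for every unit vector $\psi\in V$, $$\langle\psi|E\psi\rangle\le\frac{\dim V}{\dim Y^{\uparrow}}.$$
   Context: $Y^{\uparrow}=\mathbb{C}G\otimes_{\mathbb{C}H}Y$ with $t$ ranging over left coset representatives of $H$, equipped with the inner product making the subspaces $t\otimes Y$ pairwise orthogonal, each with the inner product of $Y$; it is then a unitary representation of $G$. *)

theory Defs
  imports "Jordan_Normal_Form.VS_Connect" "HOL-Algebra.Coset"
begin

text \<open>Finite-dimensional complex inner product spaces are modelled as
  complex column vectors of a fixed length with the standard Hermitian inner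
  product; the inner product of u and v (linear in the first argument) is
  u \<bullet>c v = sum of u_i * conj v_i.\<close>

definition unitary_mat :: "nat \<Rightarrow> complex mat \<Rightarrow> bool" where
  "unitary_mat d U \<longleftrightarrow> U \<in> carrier_mat d d \<and>
     (\<forall>v \<in> carrier_vec d. \<forall>w \<in> carrier_vec d. cscalar_prod (U *\<^sub>v v) (U *\<^sub>v w) = cscalar_prod v w)"

definition unitary_rep :: "('g, 'b) monoid_scheme \<Rightarrow> 'g set \<Rightarrow> nat \<Rightarrow> ('g \<Rightarrow> complex mat) \<Rightarrow> bool" where
  "unitary_rep G H d \<rho> \<longleftrightarrow>
     (\<forall>h \<in> H. unitary_mat d (\<rho> h)) \<and>
     (\<forall>h1 \<in> H. \<forall>h2 \<in> H. \<rho> (h1 \<otimes>\<^bsub>G\<^esub> h2) = \<rho> h1 * \<rho> h2)"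

abbreviation cvec_space :: "nat \<Rightarrow> (complex, complex vec) module" where
  "cvec_space N \<equiv> module_vec TYPE(complex) N"

definition is_subspace :: "nat \<Rightarrow> complex vec set \<Rightarrow> bool" where
  "is_subspace N W \<longleftrightarrow> subspace class_ring W (cvec_space N)"

definition subspace_dim :: "nat \<Rightarrow> complex vec set \<Rightarrow> nat" where
  "subspace_dim N W = vectorspace.dim class_ring ((cvec_space N)\<lparr>carrier := W\<rparr>)"

definition invariant_subspace :: "nat \<Rightarrow> 'g set \<Rightarrow> ('g \<Rightarrow> complex mat) \<Rightarrow> complex vec set \<Rightarrow> bool" where
  "invariant_subspace N K \<rho> W \<longleftrightarrow> is_subspace N W \<and> (\<forall>k \<in> K. \<forall>w \<in> W. \<rho> k *\<^sub>v w \<in> W)"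

definition irreducible_rep :: "'g set \<Rightarrow> nat \<Rightarrow> ('g \<Rightarrow> complex mat) \<Rightarrow> bool" where
  "irreducible_rep H d \<rho> \<longleftrightarrow> d > 0 \<and>
     (\<forall>W. invariant_subspace d H \<rho> W \<longrightarrow> W = {0\<^sub>v d} \<or> W = carrier_vec d)"

definition left_transversal :: "('g, 'b) monoid_scheme \<Rightarrow> 'g set \<Rightarrow> 'g list \<Rightarrow> bool" where
  "left_transversal G H ts \<longleftrightarrow> ts \<noteq> [] \<and> ts ! 0 = \<one>\<^bsub>G\<^esub> \<and> set ts \<subseteq> carrier G \<and>
     (\<forall>g \<in> carrier G. \<exists>!i. i < length ts \<and> g \<in> (ts ! i) <#\<^bsub>G\<^esub> H)"

text \<open>The induced representation Y\<up> = \<Oplus>_t t \<otimes> Y, realised on complex^(n*d)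
  where n = length ts: coordinate i*d + k is the k-th coordinate of the summand
  (ts!i) \<otimes> Y.  For g \<in> G, g (t_j \<otimes> y) = t_i \<otimes> \<rho>(h) y where g t_j = t_i h, h \<in> H.
  The standard inner product on complex^(n*d) makes the summands t \<otimes> Y
  pairwise orthogonal, each carrying the inner product of Y.\<close>
definition induced_mat :: "('g, 'b) monoid_scheme \<Rightarrow> 'g set \<Rightarrow> 'g list \<Rightarrow> nat \<Rightarrow> ('g \<Rightarrow> complex mat) \<Rightarrow> 'g \<Rightarrow> complex mat" where
  "induced_mat G H ts d \<rho> g = mat (length ts * d) (length ts * d) (\<lambda>(r, c).
     (let i = r div d; k = r mod d; j = c div d; l = c mod d in
      if g \<otimes>\<^bsub>G\<^esub> (ts ! j) \<in> (ts ! i) <#\<^bsub>G\<^esub> H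
      then \<rho> (inv\<^bsub>G\<^esub> (ts ! i) \<otimes>\<^bsub>G\<^esub> g \<otimes>\<^bsub>G\<^esub> (ts ! j)) $$ (k, l) else 0))"

definition proj_e :: "nat \<Rightarrow> nat \<Rightarrow> complex mat" where
  "proj_e n d = mat (n * d) (n * d) (\<lambda>(r, c). if r = c \<and> r < d then 1 else 0)"

end

theory Submission imports Defs "Jordan_Normal_Form.Spectral_Radius" "Jordan_Normal_Form.Gram_Schmidt"
begin

lemma cprod_sum: "dim_vec b = n \<Longrightarrow> a \<bullet>c b = (\<Sum>i<n. a$i * cnj (b$i))"
  unfolding scalar_prod_def by (auto simp: lessThan_atLeast0)

definition adjm :: "nat \<Rightarrow> complex mat \<Rightarrow> complex mat" where
  "adjm d U = mat d d (\<lambda>(k,l). cnj (U $$ (l,k)))"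

lemma adjm_carrier[simp]: "adjm d U \<in> carrier_mat d d" by (simp add: adjm_def)

lemma unitary_adj_left:
  assumes "unitary_mat d U" shows "adjm d U * U = 1\<^sub>m d"
proof (rule eq_matI)
  have U: "U \<in> carrier_mat d d" using assms unfolding unitary_mat_def by auto
  fix k l assume k: "k < dim_row (1\<^sub>m d)" and l: "l < dim_col (1\<^sub>m d)"
  hence kd: "k < d" and ld: "l < d" by auto
  have "cscalar_prod (U *\<^sub>v unit_vec d l) (U *\<^sub>v unit_vec d k) = cscalar_prod (unit_vec d l) (unit_vec d k)"
    using assms unfolding unitary_mat_def by auto
  also have "\<dots> = (if k = l then 1 else 0)"
    using kd ld by (simp add: cprod_sum[of _ d] sum.delta' if_distrib cong: if_cong)
  finally have e: "cscalar_prod (U *\<^sub>v unit_vec d l) (U *\<^sub>v unit_vec d k) = (if k = l then 1 else 0)" .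
  have cl: "\<And>j r. j < d \<Longrightarrow> r < d \<Longrightarrow> (U *\<^sub>v unit_vec d j) $ r = U $$ (r, j)"
    using U by (auto simp: scalar_prod_def row_def unit_vec_def if_distrib sum.delta' cong: if_cong)
  have "(adjm d U * U) $$ (k, l) = (\<Sum>r<d. cnj (U $$ (r,k)) * U $$ (r,l))"
    using kd ld U by (simp add: adjm_def scalar_prod_def row_def col_def lessThan_atLeast0)
  also have "\<dots> = cscalar_prod (U *\<^sub>v unit_vec d l) (U *\<^sub>v unit_vec d k)"
    using U kd ld by (simp add: cprod_sum[of _ d] cl mult.commute)
  finally show "(adjm d U * U) $$ (k, l) = 1\<^sub>m d $$ (k, l)" using e kd ld by simp
qed (use assms in \<open>auto simp: unitary_mat_def adjm_def\<close>)

lemma unitary_adj_right: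
  assumes "unitary_mat d U" shows "U * adjm d U = 1\<^sub>m d"
  using mat_mult_left_right_inverse[OF adjm_carrier _ unitary_adj_left[OF assms]] assms
  unfolding unitary_mat_def by auto

lemma mv_sum: "A \<in> carrier_mat m k \<Longrightarrow> v \<in> carrier_vec k \<Longrightarrow> i < m \<Longrightarrow>
   (A *\<^sub>v v) $ i = (\<Sum>s<k. A $$ (i,s) * v $ s)"
  by (auto simp: scalar_prod_def row_def lessThan_atLeast0)

lemma mm_sum: "A \<in> carrier_mat m k \<Longrightarrow> B \<in> carrier_mat k p \<Longrightarrow> i < m \<Longrightarrow> j < p \<Longrightarrow>
   (A * B) $$ (i,j) = (\<Sum>s<k. A $$ (i,s) * B $$ (s,j))"
  by (auto simp: scalar_prod_def row_def col_def lessThan_atLeast0)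

lemma orth_basis:
  fixes V :: "complex vec set"
  assumes sub: "is_subspace N V"
  shows "\<exists>us. set us \<subseteq> V \<and> set us \<subseteq> carrier_vec N \<and> corthogonal us \<and> length us = subspace_dim N V \<and>
     (\<forall>z\<in>carrier_vec N. (\<forall>u\<in>set us. z \<bullet>c u = 0) \<longrightarrow> (\<forall>v\<in>V. z \<bullet>c v = 0))"
proof -
  interpret VS: cof_vec_space N "TYPE(complex)" .
  have subsp: "VectorSpace.subspace class_ring V VS.V" using sub unfolding is_subspace_def by simp
  have submod: "submodule class_ring V VS.V" using subsp unfolding VectorSpace.subspace_def by auto
  have Vc: "V \<subseteq> carrier_vec N" using submod unfolding submodule_def by auto
  define W where "W = VS.V\<lparr>carrier := V\<rparr>"
  interpret W: vectorspace class_ring W unfolding W_def by (rule VS.subspace_is_vs[OF subsp])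
  have ldep: "\<And>S. S \<subseteq> V \<Longrightarrow> W.lin_dep S = VS.lin_dep S"
    unfolding W_def using VS.span_li_not_depend(2)[OF _ submod] by auto
  have spn: "\<And>S. S \<subseteq> V \<Longrightarrow> W.span S = VS.span S"
    unfolding W_def using VS.span_li_not_depend(1)[OF _ submod] by auto
  have cW: "carrier W = V" unfolding W_def by simp
  have bound: "\<And>S. S \<subseteq> carrier W \<and> \<not> W.lin_dep S \<Longrightarrow> finite S \<and> card S \<le> N"
  proof -
    fix S assume S: "S \<subseteq> carrier W \<and> \<not> W.lin_dep S"
    hence S1: "S \<subseteq> carrier_vec N" "\<not> VS.lin_dep S" using cW ldep Vc by auto
    show "finite S \<and> card S \<le> N" using VS.li_le_dim[OF VS.fin_dim S1] VS.dim_is_n by simp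
  qed
  have e: "{} \<subseteq> carrier W \<and> \<not> W.lin_dep {}" by (simp add: W.lin_dep_def)
  obtain A where A: "finite A" "maximal A (\<lambda>S. S \<subseteq> carrier W \<and> \<not> W.lin_dep S)"
    using maximal_exists[where P="\<lambda>S. S \<subseteq> carrier W \<and> \<not> W.lin_dep S", OF bound e] by blast
  have basis: "W.basis A" by (rule W.max_li_is_basis[OF A(2)])
  have dimA: "W.dim = card A" by (rule W.dim_basis[OF A(1) basis])
  have sd: "subspace_dim N V = card A" unfolding subspace_dim_def W_def[symmetric] dimA ..
  have AV: "A \<subseteq> V" using basis cW unfolding W.basis_def by auto
  have Ali: "\<not> VS.lin_dep A" using basis ldep[OF AV] unfolding W.basis_def by auto
  have Aspan: "VS.span A = V" using basis spn[OF AV] cW unfolding W.basis_def by auto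
  obtain ws where ws: "set ws = A" "distinct ws" using finite_distinct_list[OF A(1)] by blast
  define us where "us = gram_schmidt N ws"
  have wsc: "set ws \<subseteq> carrier_vec N" using ws AV Vc by auto
  note GS = VS.gram_schmidt_result[OF wsc ws(2) _ us_def]
  have usspan: "VS.span (set us) = V" using GS(1) Ali ws Aspan by auto
  have usc: "set us \<subseteq> carrier_vec N" using GS(3) Ali ws by auto
  have usV: "set us \<subseteq> V" using VS.in_own_span[OF usc] usspan by auto
  have len: "length us = subspace_dim N V" using GS(4) Ali ws sd distinct_card[OF ws(2)] by auto
  have orth: "corthogonal us" using GS(2) Ali ws by auto
  have perp: "\<forall>z\<in>carrier_vec N. (\<forall>u\<in>set us. z \<bullet>c u = 0) \<longrightarrow> (\<forall>v\<in>V. z \<bullet>c v = 0)"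
  proof (intro ballI impI)
    fix z v assume z: "z \<in> carrier_vec N" and zu: "\<forall>u\<in>set us. z \<bullet>c u = 0" and v: "v \<in> V"
    from v usspan obtain a B where B: "v = VS.lincomb a B" "finite B" "B \<subseteq> set us"
      using VS.in_spanE by blast
    have Bc: "B \<subseteq> carrier_vec N" using B usc by auto
    have vc: "v \<in> carrier_vec N" using v Vc by auto
    have "z \<bullet>c v = (\<Sum>i<N. z$i * cnj (v$i))" using vc by (simp add: cprod_sum[of _ N])
    also have "\<dots> = (\<Sum>i<N. z$i * cnj (\<Sum>x\<in>B. a x * x $ i))"
      by (intro sum.cong refl) (simp add: B(1) VS.lincomb_index[OF _ Bc])
    also have "\<dots> = (\<Sum>x\<in>B. cnj (a x) * (\<Sum>i<N. z$i * cnj (x $ i)))"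
      by (simp add: sum_distrib_left sum_distrib_right sum.swap[of _ B] ac_simps)
    also have "\<dots> = (\<Sum>x\<in>B. cnj (a x) * (z \<bullet>c x))"
      using Bc by (intro sum.cong refl) (auto simp: cprod_sum[of _ N])
    also have "\<dots> = 0"
    proof (rule sum.neutral, rule ballI)
      fix x assume "x \<in> B"
      hence "z \<bullet>c x = 0" using zu B(3) by blast
      thus "cnj (a x) * (z \<bullet>c x) = 0" by simp
    qed
    finally show "z \<bullet>c v = 0" .
  qed
  show ?thesis using usV usc orth len perp by blast
qed

locale indsetup = group G for G :: "('g,'b) monoid_scheme" (structure) +
  fixes H :: "'g set" and d :: nat and \<rho> :: "'g \<Rightarrow> complex mat" and ts :: "'g list"
    and V :: "complex vec set"
  assumes sub: "subgroup H G" and ur: "unitary_rep G H d \<rho>" and irr: "irreducible_rep H d \<rho>"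
    and lt: "left_transversal G H ts"
    and invV: "invariant_subspace (length ts * d) (carrier G) (induced_mat G H ts d \<rho>) V"
begin

abbreviation "n \<equiv> length ts"
abbreviation "NN \<equiv> length ts * d"
abbreviation "IM \<equiv> induced_mat G H ts d \<rho>"

lemma HG: "H \<subseteq> carrier G" using sub subgroup.subset by blast
lemma one_H: "\<one> \<in> H" using sub subgroup.one_closed by blast
lemma mult_H: "a \<in> H \<Longrightarrow> b \<in> H \<Longrightarrow> a \<otimes> b \<in> H" by (rule subgroup.m_closed[OF sub])
lemma inv_H: "a \<in> H \<Longrightarrow> inv a \<in> H" by (rule subgroup.m_inv_closed[OF sub])
lemma inv_H_iff: "a \<in> carrier G \<Longrightarrow> inv a \<in> H \<longleftrightarrow> a \<in> H"
  using inv_H inv_inv by fastforce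

lemma rho_carrier: "h \<in> H \<Longrightarrow> \<rho> h \<in> carrier_mat d d"
  using ur unfolding unitary_rep_def unitary_mat_def by auto
lemma rho_unitary: "h \<in> H \<Longrightarrow> unitary_mat d (\<rho> h)"
  using ur unfolding unitary_rep_def by auto
lemma rho_hom: "a \<in> H \<Longrightarrow> b \<in> H \<Longrightarrow> \<rho> (a \<otimes> b) = \<rho> a * \<rho> b"
  using ur unfolding unitary_rep_def by auto

lemma rho_one: "\<rho> \<one> = 1\<^sub>m d"
proof -
  let ?U = "\<rho> \<one>" let ?A = "adjm d ?U"
  have U: "?U \<in> carrier_mat d d" using rho_carrier one_H by auto
  have A: "?A * ?U = 1\<^sub>m d" using unitary_adj_left rho_unitary one_H by auto
  have e: "?U = ?U * ?U" using rho_hom[OF one_H one_H] by simp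
  have "1\<^sub>m d = ?A * (?U * ?U)" using A e by simp
  also have "\<dots> = (?A * ?U) * ?U" using U by (simp add: assoc_mult_mat[of _ d d _ d _ d])
  also have "\<dots> = ?U" using A U by simp
  finally show ?thesis by simp
qed

lemma rho_inv: assumes h: "h \<in> H" shows "\<rho> (inv h) = adjm d (\<rho> h)"
proof -
  have hG: "h \<in> carrier G" using h HG by auto
  have U: "\<rho> h \<in> carrier_mat d d" using rho_carrier h by auto
  have W: "\<rho> (inv h) \<in> carrier_mat d d" using rho_carrier inv_H h by auto
  have e: "\<rho> (inv h) * \<rho> h = 1\<^sub>m d" using rho_hom[OF inv_H[OF h] h] hG rho_one by simp
  have "\<rho> (inv h) = \<rho> (inv h) * (\<rho> h * adjm d (\<rho> h))"
    using unitary_adj_right[OF rho_unitary[OF h]] W by simp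
  also have "\<dots> = (\<rho> (inv h) * \<rho> h) * adjm d (\<rho> h)" using U W
    by (simp add: assoc_mult_mat[of _ d d _ d _ d])
  also have "\<dots> = adjm d (\<rho> h)" using e by (simp add: left_mult_one_mat[OF adjm_carrier])
  finally show ?thesis .
qed

lemma t_carr: "i < n \<Longrightarrow> ts ! i \<in> carrier G" using lt unfolding left_transversal_def by auto
lemma t0: "ts ! 0 = \<one>" and npos: "0 < n" using lt unfolding left_transversal_def by auto

lemma mem_coset: assumes a: "a \<in> carrier G" and x: "x \<in> carrier G"
  shows "x \<in> a <# H \<longleftrightarrow> inv a \<otimes> x \<in> H"
proof
  assume "x \<in> a <# H"
  then obtain h where h: "h \<in> H" "x = a \<otimes> h" unfolding l_coset_def by auto
  have "h \<in> carrier G" using h HG by auto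
  thus "inv a \<otimes> x \<in> H" using a h by (simp add: m_assoc[symmetric])
next
  assume h: "inv a \<otimes> x \<in> H"
  have "x = a \<otimes> (inv a \<otimes> x)" using a x by (simp add: m_assoc[symmetric])
  thus "x \<in> a <# H" using h unfolding l_coset_def by auto
qed

lemma uniq: "i < n \<Longrightarrow> j < n \<Longrightarrow> x \<in> carrier G \<Longrightarrow> x \<in> ts!i <# H \<Longrightarrow> x \<in> ts!j <# H \<Longrightarrow> i = j"
proof -
  assume a: "i < n" "j < n" "x \<in> carrier G" "x \<in> ts!i <# H" "x \<in> ts!j <# H"
  from lt a(3) have E: "\<exists>!i. i < n \<and> x \<in> ts!i <# H" unfolding left_transversal_def by simp
  show "i = j" using E a by blast
qed

lemma uniq': "i < n \<Longrightarrow> j < n \<Longrightarrow> x \<in> carrier G \<Longrightarrow> inv (ts!i) \<otimes> x \<in> H \<Longrightarrow> inv (ts!j) \<otimes> x \<in> H \<Longrightarrow> i = j"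
  using uniq[of i j x] mem_coset[OF t_carr[of i]] mem_coset[OF t_carr[of j]] by simp

lemma divlt: "r < NN \<Longrightarrow> r div d < n" by (simp add: less_mult_imp_div_less)
lemma modlt: "r < NN \<Longrightarrow> r mod d < d" by (cases "d = 0") auto

lemma IM_carrier: "IM g \<in> carrier_mat NN NN" by (simp add: induced_mat_def)

lemma IM_entry: assumes g: "g \<in> carrier G" and r: "r < NN" and s: "s < NN"
  shows "IM g $$ (r,s) = (if inv (ts!(r div d)) \<otimes> g \<otimes> ts!(s div d) \<in> H
     then \<rho> (inv (ts!(r div d)) \<otimes> g \<otimes> ts!(s div d)) $$ (r mod d, s mod d) else 0)"
proof -
  have ti: "ts!(r div d) \<in> carrier G" "ts!(s div d) \<in> carrier G" using t_carr divlt r s by auto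
  have "g \<otimes> ts!(s div d) \<in> ts!(r div d) <# H \<longleftrightarrow> inv (ts!(r div d)) \<otimes> g \<otimes> ts!(s div d) \<in> H"
    using mem_coset[of "ts!(r div d)" "g \<otimes> ts!(s div d)"] ti g by (simp add: m_assoc)
  thus ?thesis using r s unfolding induced_mat_def by (simp add: Let_def)
qed

lemma IM_adj_entry: assumes g: "g \<in> carrier G" and r: "r < NN" and s: "s < NN"
  shows "IM (inv g) $$ (s,r) = cnj (IM g $$ (r,s))"
proof -
  define a where "a = inv (ts!(r div d)) \<otimes> g \<otimes> ts!(s div d)"
  have ti: "ts!(r div d) \<in> carrier G" "ts!(s div d) \<in> carrier G" using t_carr divlt r s by auto
  have aG: "a \<in> carrier G" unfolding a_def using ti g by auto
  have ia: "inv (ts!(s div d)) \<otimes> inv g \<otimes> ts!(r div d) = inv a"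
    unfolding a_def using ti g by (simp add: inv_mult_group m_assoc)
  have e1: "IM g $$ (r,s) = (if a \<in> H then \<rho> a $$ (r mod d, s mod d) else 0)"
    unfolding IM_entry[OF g r s] a_def ..
  have e2: "IM (inv g) $$ (s,r) = (if inv a \<in> H then \<rho> (inv a) $$ (s mod d, r mod d) else 0)"
    unfolding IM_entry[OF inv_closed[OF g] s r] ia ..
  show ?thesis
  proof (cases "a \<in> H")
    case True
    then show ?thesis unfolding e1 e2 using inv_H[OF True] rho_inv[OF True] modlt[OF r] modlt[OF s]
      by (simp add: adjm_def)
  next
    case False
    then show ?thesis unfolding e1 e2 using inv_H_iff[OF aG] by simp
  qed
qed

lemma IM_adj: assumes g: "g \<in> carrier G" and x: "x \<in> carrier_vec NN" and y: "y \<in> carrier_vec NN"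
  shows "(IM g *\<^sub>v x) \<bullet>c y = x \<bullet>c (IM (inv g) *\<^sub>v y)"
proof -
  have "(IM g *\<^sub>v x) \<bullet>c y = (\<Sum>r<NN. (\<Sum>s<NN. IM g $$ (r,s) * x $ s) * cnj (y $ r))"
    using x y IM_carrier by (simp add: cprod_sum[of _ NN] mv_sum[of _ NN NN])
  also have "\<dots> = (\<Sum>r<NN. \<Sum>s<NN. IM g $$ (r,s) * x $ s * cnj (y $ r))" by (simp add: sum_distrib_right)
  also have "\<dots> = (\<Sum>s<NN. \<Sum>r<NN. IM g $$ (r,s) * x $ s * cnj (y $ r))" by (rule sum.swap)
  also have "\<dots> = (\<Sum>s<NN. x $ s * (\<Sum>r<NN. cnj (IM (inv g) $$ (s,r)) * cnj (y $ r)))"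
    by (auto simp: sum_distrib_left IM_adj_entry[OF g] intro!: sum.cong)
  also have "\<dots> = x \<bullet>c (IM (inv g) *\<^sub>v y)"
  proof -
    have d: "dim_vec (IM (inv g) *\<^sub>v y) = NN" using IM_carrier[of "inv g"] by simp
    show ?thesis unfolding cprod_sum[OF d]
      by (intro sum.cong refl) (simp add: mv_sum[OF IM_carrier y] sum_distrib_left)
  qed
  finally show ?thesis .
qed


lemma tH: "j < n \<Longrightarrow> ts!j \<in> H \<longleftrightarrow> j = 0"
proof
  assume j: "j < n" and h: "ts!j \<in> H"
  have tj: "ts!j \<in> carrier G" using t_carr j by auto
  show "j = 0"
    using uniq'[of j 0 "ts!j"] j npos tj h t0 one_H by simp
qed (use t0 one_H in auto)

lemma dNN: "d \<le> NN"
proof -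
  have "1 \<le> n" using npos by linarith
  from mult_le_mono1[OF this, of d] show ?thesis by simp
qed

lemma divmod_eq: "k < d \<Longrightarrow> (i*d+k) div d = i \<and> (i*d+k) mod d = k" by auto

lemma K1: assumes i: "i < n" and k: "k < d" and s: "s < NN"
  shows "IM (ts!i) $$ (i*d+k, s) = (if s = k then 1 else 0)"
proof -
  have r: "i*d+k < NN"
  proof -
    have "i*d + k < (i+1)*d" using k by simp
    also have "(i+1)*d \<le> n*d" using i by (intro mult_le_mono1) simp
    finally show ?thesis .
  qed
  have ti: "ts!i \<in> carrier G" using t_carr i by auto
  have tj: "ts!(s div d) \<in> carrier G" using t_carr divlt s by auto
  have a: "inv (ts!i) \<otimes> ts!i \<otimes> ts!(s div d) = ts!(s div d)" using ti tj by simp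
  have dm: "(i*d+k) div d = i" "(i*d+k) mod d = k" using divmod_eq[OF k] by auto
  have E: "IM (ts!i) $$ (i*d+k, s) = (if ts!(s div d) \<in> H then \<rho> (ts!(s div d)) $$ (k, s mod d) else 0)"
    unfolding IM_entry[OF ti r s] dm a ..
  show ?thesis
  proof (cases "s div d = 0")
    case True
    hence sd: "s < d" "s mod d = s" using k by (auto simp: div_eq_0_iff)
    have "ts!(s div d) = \<one>" unfolding True t0 ..
    thus ?thesis unfolding E using one_H rho_one sd k by simp
  next
    case False
    hence "s \<noteq> k" using k by auto
    thus ?thesis unfolding E using False tH[OF divlt[OF s]] by simp
  qed
qed

lemma K2: assumes i: "i < n" and k: "k < d" and r: "r < NN"
  shows "IM (ts!i) $$ (r, k) = (if r = i*d+k then 1 else 0)"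
proof -
  have s: "k < NN" using k dNN by (rule less_le_trans)
  have ti: "ts!i \<in> carrier G" using t_carr i by auto
  have tr: "ts!(r div d) \<in> carrier G" using t_carr divlt r by auto
  have a: "inv (ts!(r div d)) \<otimes> ts!i \<otimes> ts!0 = inv (ts!(r div d)) \<otimes> ts!i" using ti tr t0 by simp
  have iff: "inv (ts!(r div d)) \<otimes> ts!i \<in> H \<longleftrightarrow> r div d = i"
  proof
    assume "inv (ts!(r div d)) \<otimes> ts!i \<in> H"
    thus "r div d = i" using uniq'[of "r div d" i "ts!i"] divlt[OF r] i ti one_H by simp
  qed (use ti one_H in simp)
  have e: "r = i*d+k \<longleftrightarrow> r div d = i \<and> r mod d = k"
    using k div_mult_mod_eq[of r d] divmod_eq[OF k, of i] by auto
  have kd: "k div d = 0" "k mod d = k" using k by auto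
  have E0: "IM (ts!i) $$ (r, k) = (if inv (ts!(r div d)) \<otimes> ts!i \<in> H then \<rho> (inv (ts!(r div d)) \<otimes> ts!i) $$ (r mod d, k) else 0)"
    unfolding IM_entry[OF ti r s] kd a ..
  have E: "IM (ts!i) $$ (r, k) = (if r div d = i then \<rho> \<one> $$ (r mod d, k) else 0)"
  proof (cases "r div d = i")
    case True
    have "inv (ts!(r div d)) \<otimes> ts!i = \<one>" unfolding True using ti by simp
    thus ?thesis unfolding E0 using True one_H by simp
  next
    case False
    thus ?thesis unfolding E0 using iff by simp
  qed
  show ?thesis
  proof (cases "r div d = i")
    case True
    have "r = i*d+k \<longleftrightarrow> r mod d = k" using e True by simp
    thus ?thesis unfolding E using True rho_one modlt[OF r] k by simp
  next
    case False
    thus ?thesis unfolding E using e by simp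
  qed
qed

lemma K3: assumes h: "h \<in> H" and k: "k < d" and s: "s < NN"
  shows "IM h $$ (k, s) = (if s < d then \<rho> h $$ (k,s) else 0)"
proof -
  have r: "k < NN" using k dNN by (rule less_le_trans)
  have hG: "h \<in> carrier G" using h HG by auto
  have tj: "ts!(s div d) \<in> carrier G" using t_carr divlt s by auto
  have kd: "k div d = 0" "k mod d = k" using k by auto
  have a: "inv (ts!0) \<otimes> h \<otimes> ts!(s div d) = h \<otimes> ts!(s div d)" using hG tj t0 by simp
  have iff: "h \<otimes> ts!(s div d) \<in> H \<longleftrightarrow> s div d = 0"
  proof -
    have "h \<otimes> ts!(s div d) \<in> H \<longleftrightarrow> ts!(s div d) \<in> H"
    proof
      assume "h \<otimes> ts!(s div d) \<in> H"
      hence "inv h \<otimes> (h \<otimes> ts!(s div d)) \<in> H" using mult_H inv_H h by blast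
      thus "ts!(s div d) \<in> H" using hG tj by (simp add: m_assoc[symmetric])
    qed (use mult_H h in blast)
    thus ?thesis using tH divlt[OF s] by simp
  qed
  have sd: "s div d = 0 \<longleftrightarrow> s < d" using k by (auto simp: div_eq_0_iff)
  have E: "IM h $$ (k, s) = (if h \<otimes> ts!(s div d) \<in> H then \<rho> (h \<otimes> ts!(s div d)) $$ (k, s mod d) else 0)"
    unfolding IM_entry[OF hG r s] kd a ..
  show ?thesis
  proof (cases "s < d")
    case True
    hence e: "s div d = 0" "s mod d = s" by auto
    have "h \<otimes> ts!(s div d) = h" unfolding e t0 using hG by simp
    thus ?thesis unfolding E using True h e by simp
  next
    case False
    thus ?thesis unfolding E using iff sd by simp
  qed
qed

lemma K4: assumes h: "h \<in> H" and l: "l < d" and r: "r < NN"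
  shows "IM h $$ (r, l) = (if r < d then \<rho> h $$ (r,l) else 0)"
proof -
  have s: "l < NN" using l dNN by (rule less_le_trans)
  have hG: "h \<in> carrier G" using h HG by auto
  have tr: "ts!(r div d) \<in> carrier G" using t_carr divlt r by auto
  have ld: "l div d = 0" "l mod d = l" using l by auto
  have a: "inv (ts!(r div d)) \<otimes> h \<otimes> ts!0 = inv (ts!(r div d)) \<otimes> h" using hG tr t0 by simp
  have iff: "inv (ts!(r div d)) \<otimes> h \<in> H \<longleftrightarrow> r div d = 0"
  proof -
    have "inv (ts!(r div d)) \<otimes> h \<in> H \<longleftrightarrow> inv (ts!(r div d)) \<in> H"
    proof
      assume "inv (ts!(r div d)) \<otimes> h \<in> H"
      hence "(inv (ts!(r div d)) \<otimes> h) \<otimes> inv h \<in> H" using mult_H inv_H h by blast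
      thus "inv (ts!(r div d)) \<in> H" using hG tr by (simp add: m_assoc)
    qed (use mult_H h in blast)
    thus ?thesis using tH divlt[OF r] inv_H_iff[OF tr] by simp
  qed
  have rd: "r div d = 0 \<longleftrightarrow> r < d" using l by (auto simp: div_eq_0_iff)
  have E: "IM h $$ (r, l) = (if inv (ts!(r div d)) \<otimes> h \<in> H then \<rho> (inv (ts!(r div d)) \<otimes> h) $$ (r mod d, l) else 0)"
    unfolding IM_entry[OF hG r s] ld a ..
  show ?thesis
  proof (cases "r < d")
    case True
    hence e: "r div d = 0" "r mod d = r" by auto
    have "inv (ts!(r div d)) \<otimes> h = h" unfolding e t0 using hG by simp
    thus ?thesis unfolding E using True h e by simp
  next
    case False
    thus ?thesis unfolding E using iff rd by simp
  qed
qed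


lemma cprod_cnj: "dim_vec a = dim_vec b \<Longrightarrow> cnj (a \<bullet>c b) = b \<bullet>c a"
  by (simp add: cprod_sum[of _ "dim_vec b"] cprod_sum[of b "dim_vec a" a] ac_simps)

lemma V_facts:
  shows V_carrier: "V \<subseteq> carrier_vec NN"
    and V_zero: "0\<^sub>v NN \<in> V"
    and V_add: "v \<in> V \<Longrightarrow> w \<in> V \<Longrightarrow> v + w \<in> V"
    and V_smult: "v \<in> V \<Longrightarrow> c \<cdot>\<^sub>v v \<in> V"
    and V_inv: "g \<in> carrier G \<Longrightarrow> v \<in> V \<Longrightarrow> IM g *\<^sub>v v \<in> V"
proof -
  have sm: "submodule class_ring V (cvec_space NN)"
    using invV unfolding invariant_subspace_def is_subspace_def VectorSpace.subspace_def by auto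
  show "V \<subseteq> carrier_vec NN" using submodule.subset[OF sm] by (simp add: module_vec_simps)
  show "0\<^sub>v NN \<in> V" using submodule.zero_closed[OF sm] by (simp add: module_vec_simps)
  show "v \<in> V \<Longrightarrow> w \<in> V \<Longrightarrow> v + w \<in> V" using submodule.m_closed[OF sm, of v w] by (simp add: module_vec_simps)
  show "v \<in> V \<Longrightarrow> c \<cdot>\<^sub>v v \<in> V" using submodule.smult_closed[OF sm, of c v] by (simp add: module_vec_simps class_ring_simps)
  show "g \<in> carrier G \<Longrightarrow> v \<in> V \<Longrightarrow> IM g *\<^sub>v v \<in> V" using invV unfolding invariant_subspace_def by auto
qed

lemma V_sub: "is_subspace NN V" using invV unfolding invariant_subspace_def by auto

definition "us = (SOME us. set us \<subseteq> V \<and> set us \<subseteq> carrier_vec NN \<and> corthogonal us \<and> length us = subspace_dim NN V \<and>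
     (\<forall>z\<in>carrier_vec NN. (\<forall>u\<in>set us. z \<bullet>c u = 0) \<longrightarrow> (\<forall>v\<in>V. z \<bullet>c v = 0)))"

lemma us_props: "set us \<subseteq> V" "set us \<subseteq> carrier_vec NN" "corthogonal us" "length us = subspace_dim NN V"
   "\<And>z v. z \<in> carrier_vec NN \<Longrightarrow> (\<forall>u\<in>set us. z \<bullet>c u = 0) \<Longrightarrow> v \<in> V \<Longrightarrow> z \<bullet>c v = 0"
  using someI_ex[OF orth_basis[OF V_sub]] unfolding us_def[symmetric] by blast+

abbreviation "m \<equiv> length us"
abbreviation "nrm a \<equiv> (us!a) \<bullet>c (us!a)"

lemma u_V: "a < m \<Longrightarrow> us!a \<in> V" using us_props(1) by auto
lemma u_c: "a < m \<Longrightarrow> us!a \<in> carrier_vec NN" using us_props(2) by auto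
lemma u_dim[simp]: "a < m \<Longrightarrow> dim_vec (us!a) = NN" using u_c by auto
lemma nrm_nz: "a < m \<Longrightarrow> nrm a \<noteq> 0" using us_props(3) unfolding corthogonal_def by auto
lemma u_orth: "a < m \<Longrightarrow> b < m \<Longrightarrow> a \<noteq> b \<Longrightarrow> (us!a) \<bullet>c (us!b) = 0" using us_props(3) unfolding corthogonal_def by auto
lemma nrm_real: "a < m \<Longrightarrow> cnj (nrm a) = nrm a" using cprod_cnj[of "us!a" "us!a"] by simp

definition "P = mat NN NN (\<lambda>(r,s). \<Sum>a<m. (us!a)$r * cnj ((us!a)$s) / nrm a)"
definition "cf x a = (x \<bullet>c (us!a)) / nrm a"
definition "lc f = vec NN (\<lambda>r. \<Sum>a<m. f a * (us!a)$r)"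

lemma P_carrier: "P \<in> carrier_mat NN NN" unfolding P_def by simp
lemma P_dims[simp]: "dim_row P = NN" "dim_col P = NN" unfolding P_def by simp_all
lemma IM_dims[simp]: "dim_row (IM g) = NN" "dim_col (IM g) = NN" using IM_carrier[of g] by auto
lemma lc_carrier: "lc f \<in> carrier_vec NN" unfolding lc_def by simp

lemma P_lc: assumes x: "x \<in> carrier_vec NN" shows "P *\<^sub>v x = lc (cf x)"
proof (rule eq_vecI)
  fix r assume "r < dim_vec (lc (cf x))" hence r: "r < NN" by (simp add: lc_def)
  have "(P *\<^sub>v x) $ r = (\<Sum>s<NN. (\<Sum>a<m. (us!a)$r * cnj ((us!a)$s) / nrm a) * x $ s)"
    using mv_sum[OF P_carrier x r] r by (simp add: P_def)
  also have "\<dots> = (\<Sum>a<m. \<Sum>s<NN. (us!a)$r * cnj ((us!a)$s) / nrm a * x $ s)"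
    by (simp add: sum_distrib_right sum.swap[of _ "{..<NN}"])
  also have "\<dots> = (\<Sum>a<m. cf x a * (us!a)$r)"
    by (intro sum.cong refl) (simp add: cf_def cprod_sum[of _ NN] sum_distrib_left sum_distrib_right sum_divide_distrib ac_simps)
  also have "\<dots> = lc (cf x) $ r" using r by (simp add: lc_def)
  finally show "(P *\<^sub>v x) $ r = lc (cf x) $ r" .
qed (simp add: P_def lc_def)

lemma lc_cprod: assumes y: "y \<in> carrier_vec NN" shows "lc f \<bullet>c y = (\<Sum>a<m. f a * ((us!a) \<bullet>c y))"
proof -
  have "lc f \<bullet>c y = (\<Sum>r<NN. (\<Sum>a<m. f a * (us!a)$r) * cnj (y$r))" using y by (simp add: cprod_sum[of _ NN] lc_def)
  also have "\<dots> = (\<Sum>a<m. \<Sum>r<NN. f a * (us!a)$r * cnj (y$r))" by (simp add: sum_distrib_right sum.swap[of _ "{..<m}"])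
  also have "\<dots> = (\<Sum>a<m. f a * ((us!a) \<bullet>c y))" using y by (simp add: cprod_sum[of _ NN] sum_distrib_left ac_simps)
  finally show ?thesis .
qed

lemma cprod_lc: assumes y: "y \<in> carrier_vec NN" shows "y \<bullet>c lc f = (\<Sum>a<m. cnj (f a) * (y \<bullet>c (us!a)))"
proof -
  have "y \<bullet>c lc f = cnj (lc f \<bullet>c y)" using cprod_cnj[of "lc f" y] y by (simp add: lc_def)
  also have "\<dots> = (\<Sum>a<m. cnj (f a) * cnj ((us!a) \<bullet>c y))" using lc_cprod[OF y] by simp
  also have "\<dots> = (\<Sum>a<m. cnj (f a) * (y \<bullet>c (us!a)))"
    by (intro sum.cong refl) (use y cprod_cnj[of "us!_" y] in auto)
  finally show ?thesis .
qed

lemma lc_V: "lc f \<in> V"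
proof -
  have "\<And>k. k \<le> m \<Longrightarrow> vec NN (\<lambda>r. \<Sum>a<k. f a * (us!a)$r) \<in> V"
  proof -
    fix k show "k \<le> m \<Longrightarrow> vec NN (\<lambda>r. \<Sum>a<k. f a * (us!a)$r) \<in> V"
    proof (induction k)
      case 0 then show ?case using V_zero by (simp add: zero_vec_def)
    next
      case (Suc k)
      have e: "vec NN (\<lambda>r. \<Sum>a<Suc k. f a * (us!a)$r) = vec NN (\<lambda>r. \<Sum>a<k. f a * (us!a)$r) + f k \<cdot>\<^sub>v (us!k)"
        using Suc.prems by (intro eq_vecI) auto
      show ?case unfolding e using Suc V_add V_smult u_V by simp
    qed
  qed
  thus ?thesis unfolding lc_def by simp
qed

lemma P_V: "x \<in> carrier_vec NN \<Longrightarrow> P *\<^sub>v x \<in> V" using P_lc lc_V by simp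
lemma P_c: "x \<in> carrier_vec NN \<Longrightarrow> P *\<^sub>v x \<in> carrier_vec NN" using P_carrier by simp

lemma P_sa: assumes x: "x \<in> carrier_vec NN" and y: "y \<in> carrier_vec NN"
  shows "(P *\<^sub>v x) \<bullet>c y = x \<bullet>c (P *\<^sub>v y)"
proof -
  have "(P *\<^sub>v x) \<bullet>c y = (\<Sum>a<m. cf x a * ((us!a) \<bullet>c y))" using P_lc[OF x] lc_cprod[OF y] by simp
  also have "\<dots> = (\<Sum>a<m. cnj (cf y a) * (x \<bullet>c (us!a)))"
  proof (intro sum.cong refl)
    fix a assume "a \<in> {..<m}" hence a: "a < m" by simp
    have "cnj (cf y a) = ((us!a) \<bullet>c y) / nrm a"
      unfolding cf_def using cprod_cnj[of y "us!a"] y a nrm_real[OF a] by simp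
    thus "cf x a * ((us!a) \<bullet>c y) = cnj (cf y a) * (x \<bullet>c (us!a))" unfolding cf_def by simp
  qed
  also have "\<dots> = x \<bullet>c (P *\<^sub>v y)" using P_lc[OF y] cprod_lc[OF x] by simp
  finally show ?thesis .
qed

lemma P_orth: assumes x: "x \<in> carrier_vec NN" and b: "b < m"
  shows "(P *\<^sub>v x) \<bullet>c (us!b) = x \<bullet>c (us!b)"
proof -
  have "(P *\<^sub>v x) \<bullet>c (us!b) = (\<Sum>a<m. cf x a * ((us!a) \<bullet>c (us!b)))" using P_lc[OF x] lc_cprod[OF u_c[OF b]] by simp
  also have "\<dots> = (\<Sum>a<m. if a = b then cf x b * nrm b else 0)"
    by (intro sum.cong refl) (use u_orth b in auto)
  also have "\<dots> = cf x b * nrm b" using b by simp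
  also have "\<dots> = x \<bullet>c (us!b)" unfolding cf_def using nrm_nz[OF b] by simp
  finally show ?thesis .
qed

lemma cprod_minus: fixes a b c :: "complex vec" assumes a: "a \<in> carrier_vec NN" and b: "b \<in> carrier_vec NN" and c: "c \<in> carrier_vec NN"
  shows "(a - b) \<bullet>c c = a \<bullet>c c - b \<bullet>c c"
proof -
  have dc: "dim_vec c = NN" using c by simp
  have "(\<Sum>i<NN. (a - b) $ i * cnj (c $ i)) = (\<Sum>i<NN. a $ i * cnj (c $ i) - b $ i * cnj (c $ i))"
    by (intro sum.cong refl) (use b in \<open>auto simp: left_diff_distrib\<close>)
  thus ?thesis unfolding cprod_sum[OF dc] by (simp add: sum_subtractf)
qed

lemma P_fix: assumes v: "v \<in> V" shows "P *\<^sub>v v = v"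
proof -
  have vc: "v \<in> carrier_vec NN" using v V_carrier by auto
  define z where "z = v - P *\<^sub>v v"
  have zc: "z \<in> carrier_vec NN" unfolding z_def using vc P_c by simp
  have zV: "z \<in> V"
  proof -
    have "z = v + (-1) \<cdot>\<^sub>v (P *\<^sub>v v)" unfolding z_def using vc P_c[OF vc] by (intro eq_vecI) auto
    thus ?thesis using V_add[OF v V_smult[OF P_V[OF vc]]] by simp
  qed
  have zu: "\<forall>u\<in>set us. z \<bullet>c u = 0"
  proof
    fix u assume "u \<in> set us"
    then obtain b where b: "b < m" "u = us!b" by (auto simp: in_set_conv_nth)
    show "z \<bullet>c u = 0" unfolding z_def b(2) using cprod_minus[OF vc P_c[OF vc] u_c[OF b(1)]] P_orth[OF vc b(1)] by simp
  qed
  have "z \<bullet>c z = 0" using us_props(5)[OF zc zu zV] .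
  hence z0: "z = 0\<^sub>v NN" by (rule iffD1[OF conjugate_square_eq_0_vec[OF zc]])
  show ?thesis
  proof (rule eq_vecI)
    fix i assume "i < dim_vec v" hence i: "i < NN" using vc by simp
    have "(v - P *\<^sub>v v) $ i = 0" using z0 i unfolding z_def by simp
    moreover have "dim_vec (P *\<^sub>v v) = NN" using P_c[OF vc] by simp
    ultimately show "(P *\<^sub>v v) $ i = v $ i" using index_minus_vec(1)[of i "P *\<^sub>v v" v] i by simp
  qed (use vc P_c[OF vc] in simp)
qed

lemma P_perp: assumes x: "x \<in> carrier_vec NN" and v: "v \<in> V"
  shows "(x - P *\<^sub>v x) \<bullet>c v = 0"
proof -
  have vc: "v \<in> carrier_vec NN" using v V_carrier by auto
  show ?thesis using cprod_minus[OF x P_c[OF x] vc] P_sa[OF x vc] P_fix[OF v] by simp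
qed

lemma P_zero: assumes x: "x \<in> carrier_vec NN" and p: "\<forall>v\<in>V. x \<bullet>c v = 0"
  shows "P *\<^sub>v x = 0\<^sub>v NN"
proof -
  have "\<And>a. a < m \<Longrightarrow> cf x a = 0" unfolding cf_def using p u_V by auto
  hence "lc (cf x) = 0\<^sub>v NN" unfolding lc_def by (intro eq_vecI) auto
  thus ?thesis using P_lc[OF x] by simp
qed

lemma P_trace: "(\<Sum>r<NN. P $$ (r,r)) = of_nat m"
proof -
  have "(\<Sum>r<NN. P $$ (r,r)) = (\<Sum>r<NN. \<Sum>a<m. (us!a)$r * cnj ((us!a)$r) / nrm a)"
    by (simp add: P_def)
  also have "\<dots> = (\<Sum>a<m. (\<Sum>r<NN. (us!a)$r * cnj ((us!a)$r)) / nrm a)"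
    by (simp add: sum.swap[of _ "{..<NN}"] sum_divide_distrib)
  also have "\<dots> = (\<Sum>a<m. 1)"
  proof (intro sum.cong refl)
    fix a assume "a \<in> {..<m}" hence a: "a < m" by simp
    have "(\<Sum>r<NN. (us!a)$r * cnj ((us!a)$r)) = nrm a" using a by (simp add: cprod_sum[of _ NN])
    thus "(\<Sum>r<NN. (us!a)$r * cnj ((us!a)$r)) / nrm a = 1" using nrm_nz[OF a] by simp
  qed
  finally show ?thesis by simp
qed

lemma P_comm_vec: assumes g: "g \<in> carrier G" and x: "x \<in> carrier_vec NN"
  shows "IM g *\<^sub>v (P *\<^sub>v x) = P *\<^sub>v (IM g *\<^sub>v x)"
proof -
  have Px: "P *\<^sub>v x \<in> carrier_vec NN" using P_c[OF x] .
  define w where "w = IM g *\<^sub>v (P *\<^sub>v x)"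
  define y where "y = IM g *\<^sub>v x"
  have wc: "w \<in> carrier_vec NN" unfolding w_def using IM_carrier[of g] Px by simp
  have yc: "y \<in> carrier_vec NN" unfolding y_def using IM_carrier[of g] x by simp
  have wV: "w \<in> V" unfolding w_def using V_inv[OF g P_V[OF x]] .
  have xm: "x - P *\<^sub>v x \<in> carrier_vec NN" using x Px by simp
  have yw: "y - w = IM g *\<^sub>v (x - P *\<^sub>v x)"
    unfolding y_def w_def using mult_minus_distrib_mat_vec[OF IM_carrier x Px] by simp
  have perp: "\<forall>v\<in>V. (y - w) \<bullet>c v = 0"
  proof
    fix v assume v: "v \<in> V"
    have vc: "v \<in> carrier_vec NN" using v V_carrier by auto
    have "(y - w) \<bullet>c v = (x - P *\<^sub>v x) \<bullet>c (IM (inv g) *\<^sub>v v)"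
      unfolding yw using IM_adj[OF g xm vc] .
    also have "\<dots> = 0" using P_perp[OF x V_inv[OF inv_closed[OF g] v]] .
    finally show "(y - w) \<bullet>c v = 0" .
  qed
  have ywc: "y - w \<in> carrier_vec NN" using yc wc by simp
  have "P *\<^sub>v y = P *\<^sub>v (w + (y - w))"
  proof -
    have "y = w + (y - w)" using yc wc by (intro eq_vecI) auto
    thus ?thesis by simp
  qed
  also have "\<dots> = P *\<^sub>v w + P *\<^sub>v (y - w)" using mult_add_distrib_mat_vec[OF P_carrier wc ywc] .
  also have "\<dots> = w + 0\<^sub>v NN" using P_fix[OF wV] P_zero[OF ywc perp] by simp
  also have "\<dots> = w" using wc by simp
  finally show ?thesis unfolding w_def y_def by simp
qed

lemma mat_unit_col: fixes A :: "complex mat" assumes A: "A \<in> carrier_mat k k" and r: "r < k" and c: "c < k"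
  shows "(A *\<^sub>v unit_vec k c) $ r = A $$ (r,c)"
proof -
  have "(A *\<^sub>v unit_vec k c) $ r = (\<Sum>s<k. A $$ (r,s) * unit_vec k c $ s)"
    using mv_sum[OF A unit_vec_carrier r] .
  also have "\<dots> = (\<Sum>s<k. if s = c then A $$ (r,c) else 0)"
    by (intro sum.cong refl) (auto simp: unit_vec_def)
  also have "\<dots> = A $$ (r,c)" using c by simp
  finally show ?thesis .
qed

lemma P_comm: assumes g: "g \<in> carrier G" shows "IM g * P = P * IM g"
proof (rule eq_matI)
  fix r c assume "r < dim_row (P * IM g)" "c < dim_col (P * IM g)"
  hence r: "r < NN" and c: "c < NN" by auto
  have e: "unit_vec NN c \<in> carrier_vec NN" by simp
  have "(IM g * P) $$ (r,c) = ((IM g * P) *\<^sub>v unit_vec NN c) $ r"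
    using mat_unit_col[of "IM g * P" NN r c] r c IM_carrier[of g] P_carrier by simp
  also have "\<dots> = (IM g *\<^sub>v (P *\<^sub>v unit_vec NN c)) $ r" using IM_carrier[of g] P_carrier e by simp
  also have "\<dots> = (P *\<^sub>v (IM g *\<^sub>v unit_vec NN c)) $ r" using P_comm_vec[OF g e] by simp
  also have "\<dots> = ((P * IM g) *\<^sub>v unit_vec NN c) $ r" using IM_carrier[of g] P_carrier e by simp
  also have "\<dots> = (P * IM g) $$ (r,c)"
    using mat_unit_col[of "P * IM g" NN r c] r c IM_carrier[of g] P_carrier by simp
  finally show "(IM g * P) $$ (r,c) = (P * IM g) $$ (r,c)" .
qed auto

lemma sum_restrict: fixes f :: "nat \<Rightarrow> complex" and N :: nat shows "k \<le> N \<Longrightarrow> (\<Sum>s<N. if s < k then f s else 0) = (\<Sum>s<k. f s)"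
proof -
  assume k: "k \<le> N"
  have "(\<Sum>s<N. if s < k then f s else 0) = (\<Sum>s\<in>{..<N} \<inter> {s. s < k}. f s)"
    by (subst sum.inter_restrict) auto
  also have "{..<N} \<inter> {s. s < k} = {..<k}" using k by auto
  finally show ?thesis .
qed

definition "M = mat d d (\<lambda>(k,l). P $$ (k,l))"

lemma M_carrier: "M \<in> carrier_mat d d" unfolding M_def by simp

lemma M_comm: assumes h: "h \<in> H" shows "M * \<rho> h = \<rho> h * M"
proof (rule eq_matI)
  have hG: "h \<in> carrier G" using h HG by auto
  have R: "\<rho> h \<in> carrier_mat d d" using rho_carrier[OF h] .
  fix k l assume "k < dim_row (\<rho> h * M)" "l < dim_col (\<rho> h * M)"
  hence k: "k < d" and l: "l < d" using R M_carrier by auto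
  have kN: "k < NN" and lN: "l < NN" using less_le_trans[OF k dNN] less_le_trans[OF l dNN] by auto
  have "(\<rho> h * M) $$ (k,l) = (\<Sum>s<d. \<rho> h $$ (k,s) * M $$ (s,l))" using mm_sum[OF R M_carrier k l] .
  also have "\<dots> = (\<Sum>s<d. \<rho> h $$ (k,s) * P $$ (s,l))" by (intro sum.cong refl) (simp add: M_def l)
  also have "\<dots> = (\<Sum>s<NN. if s < d then \<rho> h $$ (k,s) * P $$ (s,l) else 0)"
    using sum_restrict[OF dNN] by simp
  also have "\<dots> = (\<Sum>s<NN. IM h $$ (k,s) * P $$ (s,l))"
    by (intro sum.cong refl) (simp add: K3[OF h k])
  also have "\<dots> = (IM h * P) $$ (k,l)" using mm_sum[OF IM_carrier P_carrier kN lN] by simp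
  also have "\<dots> = (P * IM h) $$ (k,l)" using P_comm[OF hG] by simp
  also have "\<dots> = (\<Sum>s<NN. P $$ (k,s) * IM h $$ (s,l))" using mm_sum[OF P_carrier IM_carrier kN lN] by simp
  also have "\<dots> = (\<Sum>s<NN. if s < d then P $$ (k,s) * \<rho> h $$ (s,l) else 0)"
    by (intro sum.cong refl) (simp add: K4[OF h l])
  also have "\<dots> = (\<Sum>s<d. P $$ (k,s) * \<rho> h $$ (s,l))"
    using sum_restrict[OF dNN] by simp
  also have "\<dots> = (\<Sum>s<d. M $$ (k,s) * \<rho> h $$ (s,l))" by (intro sum.cong refl) (simp add: M_def k)
  also have "\<dots> = (M * \<rho> h) $$ (k,l)" using mm_sum[OF M_carrier R k l] by simp
  finally show "(M * \<rho> h) $$ (k,l) = (\<rho> h * M) $$ (k,l)" by simp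
qed (use M_carrier rho_carrier[OF h] in auto)

lemma dpos: "0 < d" using irr unfolding irreducible_rep_def by auto

lemma M_scalar: "\<exists>lam. \<forall>k<d. \<forall>l<d. P $$ (k,l) = (if k = l then lam else 0)"
proof -
  obtain lam where "lam \<in> spectrum M" using spectrum_non_empty[OF M_carrier dpos] by blast
  then obtain v where v: "v \<in> carrier_vec d" "v \<noteq> 0\<^sub>v d" "M *\<^sub>v v = lam \<cdot>\<^sub>v v"
    unfolding spectrum_def eigenvalue_def eigenvector_def using M_carrier by auto
  define W where "W = {y \<in> carrier_vec d. M *\<^sub>v y = lam \<cdot>\<^sub>v y}"
  have sm: "submodule class_ring W (cvec_space d)"
  proof (unfold submodule_def, intro conjI allI impI)
    show "Module.module class_ring (cvec_space d)" by (rule vec_module)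
    show "W \<subseteq> carrier (cvec_space d)" unfolding W_def by (auto simp: module_vec_simps)
    show "\<zero>\<^bsub>cvec_space d\<^esub> \<in> W" unfolding W_def using M_carrier by (auto simp: module_vec_simps)
  next
    fix x y assume "x \<in> W" "y \<in> W"
    thus "x \<oplus>\<^bsub>cvec_space d\<^esub> y \<in> W" unfolding W_def using M_carrier
      by (auto simp: module_vec_simps mult_add_distrib_mat_vec[OF M_carrier] smult_add_distrib_vec[of _ d])
  next
    fix c :: complex and x assume "c \<in> carrier class_ring" "x \<in> W"
    thus "c \<odot>\<^bsub>cvec_space d\<^esub> x \<in> W" unfolding W_def using M_carrier
      by (auto simp: module_vec_simps mult_mat_vec[OF M_carrier] smult_smult_assoc mult.commute)
  qed
  have inv: "invariant_subspace d H \<rho> W"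
    unfolding invariant_subspace_def is_subspace_def VectorSpace.subspace_def
  proof (intro conjI ballI)
    show "vectorspace class_ring (cvec_space d)" by (rule vec_vs)
    show "submodule class_ring W (cvec_space d)" by (rule sm)
  next
    fix h w assume h: "h \<in> H" and w: "w \<in> W"
    have R: "\<rho> h \<in> carrier_mat d d" using rho_carrier[OF h] .
    have wc: "w \<in> carrier_vec d" and Mw: "M *\<^sub>v w = lam \<cdot>\<^sub>v w" using w unfolding W_def by auto
    have "M *\<^sub>v (\<rho> h *\<^sub>v w) = (M * \<rho> h) *\<^sub>v w" using M_carrier R wc by simp
    also have "\<dots> = (\<rho> h * M) *\<^sub>v w" using M_comm[OF h] by simp
    also have "\<dots> = \<rho> h *\<^sub>v (lam \<cdot>\<^sub>v w)" using M_carrier R wc Mw by simp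
    also have "\<dots> = lam \<cdot>\<^sub>v (\<rho> h *\<^sub>v w)" using mult_mat_vec[OF R wc] .
    finally show "\<rho> h *\<^sub>v w \<in> W" unfolding W_def using R wc by simp
  qed
  have "v \<in> W" unfolding W_def using v by simp
  hence WW: "W = carrier_vec d" using irr inv v(2) unfolding irreducible_rep_def by auto
  show ?thesis
  proof (intro exI allI impI)
    fix k l assume k: "k < d" and l: "l < d"
    have "unit_vec d l \<in> W" using WW by simp
    hence "M *\<^sub>v unit_vec d l = lam \<cdot>\<^sub>v unit_vec d l" unfolding W_def by simp
    hence "(M *\<^sub>v unit_vec d l) $ k = lam * (unit_vec d l) $ k" using k by simp
    thus "P $$ (k,l) = (if k = l then lam else 0)"
      using mat_unit_col[OF M_carrier k l] k l by (simp add: M_def)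
  qed
qed

lemma P_diag: "\<exists>lam. (\<forall>r<NN. P $$ (r,r) = lam) \<and> (\<forall>k<d. \<forall>l<d. P $$ (k,l) = (if k = l then lam else 0))"
proof -
  obtain lam where lam: "\<forall>k<d. \<forall>l<d. P $$ (k,l) = (if k = l then lam else 0)" using M_scalar by blast
  have "\<forall>r<NN. P $$ (r,r) = lam"
  proof (intro allI impI)
    fix r assume r: "r < NN"
    define i where "i = r div d" define k where "k = r mod d"
    have i: "i < n" and k: "k < d" unfolding i_def k_def using divlt[OF r] modlt[OF r] by auto
    have rr: "r = i*d+k" unfolding i_def k_def by simp
    have kN: "k < NN" using less_le_trans[OF k dNN] .
    have tG: "ts!i \<in> carrier G" using t_carr[OF i] .
    have "(IM (ts!i) * P) $$ (r,k) = (\<Sum>s<NN. IM (ts!i) $$ (r,s) * P $$ (s,k))"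
      using mm_sum[OF IM_carrier P_carrier r kN] .
    also have "\<dots> = (\<Sum>s<NN. if s = k then P $$ (k,k) else 0)"
      by (intro sum.cong refl) (simp add: rr K1[OF i k])
    also have "\<dots> = P $$ (k,k)" using kN by simp
    finally have 1: "(IM (ts!i) * P) $$ (r,k) = P $$ (k,k)" .
    have "(P * IM (ts!i)) $$ (r,k) = (\<Sum>s<NN. P $$ (r,s) * IM (ts!i) $$ (s,k))"
      using mm_sum[OF P_carrier IM_carrier r kN] .
    also have "\<dots> = (\<Sum>s<NN. if s = r then P $$ (r,r) else 0)"
      by (intro sum.cong refl) (simp add: K2[OF i k] rr)
    also have "\<dots> = P $$ (r,r)" using r by simp
    finally have 2: "(P * IM (ts!i)) $$ (r,k) = P $$ (r,r)" .
    show "P $$ (r,r) = lam" using 1 2 P_comm[OF tG] lam k by simp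
  qed
  thus ?thesis using lam by blast
qed

lemma cprod_expand: fixes a b :: "complex vec" and t :: complex
  assumes a: "a \<in> carrier_vec NN" and b: "b \<in> carrier_vec NN" and t: "cnj t = t"
  shows "(a - t \<cdot>\<^sub>v b) \<bullet>c (a - t \<cdot>\<^sub>v b) = a \<bullet>c a - t * (b \<bullet>c a) - t * (a \<bullet>c b) + t * t * (b \<bullet>c b)"
proof -
  have dd: "dim_vec (a - t \<cdot>\<^sub>v b) = NN" using b by simp
  have "(a - t \<cdot>\<^sub>v b) \<bullet>c (a - t \<cdot>\<^sub>v b) = (\<Sum>i<NN. (a - t \<cdot>\<^sub>v b) $ i * cnj ((a - t \<cdot>\<^sub>v b) $ i))"
    using cprod_sum[OF dd] .
  also have "\<dots> = (\<Sum>i<NN. a$i * cnj (a$i) - t * (b$i * cnj (a$i)) - t * (a$i * cnj (b$i)) + t * t * (b$i * cnj (b$i)))"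
  proof (intro sum.cong refl)
    fix i assume "i \<in> {..<NN}" hence i: "i < NN" by simp
    have e: "(a - t \<cdot>\<^sub>v b) $ i = a$i - t * b$i" using i b by simp
    show "(a - t \<cdot>\<^sub>v b) $ i * cnj ((a - t \<cdot>\<^sub>v b) $ i) =
      a$i * cnj (a$i) - t * (b$i * cnj (a$i)) - t * (a$i * cnj (b$i)) + t * t * (b$i * cnj (b$i))"
      unfolding e using t by (simp add: algebra_simps)
  qed
  also have "\<dots> = a \<bullet>c a - t * (b \<bullet>c a) - t * (a \<bullet>c b) + t * t * (b \<bullet>c b)"
    using a b by (simp add: cprod_sum[of _ NN] sum.distrib sum_subtractf sum_distrib_left)
  finally show ?thesis .
qed

lemma quad: fixes s l :: real assumes s: "s \<ge> 0" and l: "l \<ge> 0" and q: "\<And>t. 0 \<le> 1 - 2*t*s + t^2*l*s"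
  shows "s \<le> l"
proof (rule ccontr)
  assume "\<not> s \<le> l" hence sl: "l < s" by simp
  hence sp: "s > 0" using l by simp
  show False
  proof (cases "l = 0")
    case True
    have "0 \<le> 1 - 2*(1/s)*s + (1/s)^2*l*s" by (rule q)
    thus False using True sp by simp
  next
    case False
    hence lp: "l > 0" using l by simp
    have "0 \<le> 1 - 2*(1/l)*s + (1/l)^2*l*s" by (rule q)
    also have "\<dots> = 1 - s/l" using lp by (simp add: power2_eq_square field_simps)
    finally have "s/l \<le> 1" by simp
    thus False using sl lp by (simp add: field_simps)
  qed
qed

lemma final: assumes psi: "\<psi> \<in> V" and n1: "\<psi> \<bullet>c \<psi> = 1"
  shows "(proj_e n d *\<^sub>v \<psi>) \<bullet>c \<psi> \<in> \<real> \<and>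
         Re ((proj_e n d *\<^sub>v \<psi>) \<bullet>c \<psi>) \<le> real (subspace_dim NN V) / real NN"
proof -
  obtain lam where lam: "\<forall>r<NN. P $$ (r,r) = lam" "\<forall>k<d. \<forall>l<d. P $$ (k,l) = (if k = l then lam else 0)"
    using P_diag by blast
  have NNpos: "NN > 0" using npos dpos by simp
  have "of_nat m = (\<Sum>r<NN. P $$ (r,r))" using P_trace by simp
  also have "\<dots> = of_nat NN * lam" using lam(1) by simp
  finally have tr: "of_nat m = of_nat NN * lam" .
  define lr where "lr = real m / real NN"
  have lamr: "lam = complex_of_real lr" unfolding lr_def using tr NNpos
    by (simp add: field_simps)
  have lr0: "lr \<ge> 0" unfolding lr_def by simp
  have pc: "\<psi> \<in> carrier_vec NN" using psi V_carrier by auto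
  have Ec: "proj_e n d \<in> carrier_mat NN NN" by (simp add: proj_e_def)
  define u where "u = proj_e n d *\<^sub>v \<psi>"
  have uc: "u \<in> carrier_vec NN" unfolding u_def using Ec pc by simp
  have ui: "\<And>r. r < NN \<Longrightarrow> u $ r = (if r < d then \<psi> $ r else 0)"
  proof -
    fix r assume r: "r < NN"
    have "u $ r = (\<Sum>s<NN. proj_e n d $$ (r,s) * \<psi> $ s)" unfolding u_def using mv_sum[OF Ec pc r] .
    also have "\<dots> = (\<Sum>s<NN. if s = r then (if r < d then \<psi> $ r else 0) else 0)"
      by (intro sum.cong refl) (auto simp: proj_e_def r)
    also have "\<dots> = (if r < d then \<psi> $ r else 0)" using r by simp
    finally show "u $ r = (if r < d then \<psi> $ r else 0)" .
  qed
  define sr where "sr = (\<Sum>r<d. (cmod (\<psi> $ r))^2)"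
  have sr0: "sr \<ge> 0" unfolding sr_def by (simp add: sum_nonneg)
  have sumS: "(\<Sum>r<d. \<psi> $ r * cnj (\<psi> $ r)) = complex_of_real sr"
  proof -
    have "(\<Sum>r<d. \<psi> $ r * cnj (\<psi> $ r)) = (\<Sum>r<d. complex_of_real ((cmod (\<psi> $ r))^2))"
      by (intro sum.cong refl) (rule complex_norm_square[symmetric])
    also have "\<dots> = complex_of_real sr" unfolding sr_def by simp
    finally show ?thesis .
  qed
  have S: "u \<bullet>c \<psi> = complex_of_real sr"
  proof -
    have "u \<bullet>c \<psi> = (\<Sum>r<NN. u $ r * cnj (\<psi> $ r))" using pc by (simp add: cprod_sum[of _ NN])
    also have "\<dots> = (\<Sum>r<NN. if r < d then \<psi> $ r * cnj (\<psi> $ r) else 0)"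
      by (intro sum.cong refl) (simp add: ui)
    also have "\<dots> = (\<Sum>r<d. \<psi> $ r * cnj (\<psi> $ r))" using sum_restrict[OF dNN] by simp
    also have "\<dots> = (\<Sum>r<d. complex_of_real ((cmod (\<psi> $ r))^2))"
      by (intro sum.cong refl) (rule complex_norm_square[symmetric])
    also have "\<dots> = complex_of_real sr" unfolding sr_def by simp
    finally show ?thesis .
  qed
  define w where "w = P *\<^sub>v u"
  have wc: "w \<in> carrier_vec NN" unfolding w_def using P_c[OF uc] .
  have wi: "\<And>k. k < d \<Longrightarrow> w $ k = lam * \<psi> $ k"
  proof -
    fix k assume k: "k < d"
    have kN: "k < NN" using less_le_trans[OF k dNN] .
    have "w $ k = (\<Sum>s<NN. P $$ (k,s) * u $ s)" unfolding w_def using mv_sum[OF P_carrier uc kN] .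
    also have "\<dots> = (\<Sum>s<NN. if s < d then P $$ (k,s) * \<psi> $ s else 0)"
      by (intro sum.cong refl) (simp add: ui)
    also have "\<dots> = (\<Sum>s<d. P $$ (k,s) * \<psi> $ s)" using sum_restrict[OF dNN] by simp
    also have "\<dots> = (\<Sum>s<d. if s = k then lam * \<psi> $ k else 0)"
      by (intro sum.cong refl) (use lam(2) k in auto)
    also have "\<dots> = lam * \<psi> $ k" using k by simp
    finally show "w $ k = lam * \<psi> $ k" .
  qed
  have wu: "w \<bullet>c u = lam * complex_of_real sr"
  proof -
    have "w \<bullet>c u = (\<Sum>r<NN. w $ r * cnj (u $ r))" using uc by (simp add: cprod_sum[of _ NN])
    also have "\<dots> = (\<Sum>r<NN. if r < d then lam * (\<psi> $ r * cnj (\<psi> $ r)) else 0)"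
      by (intro sum.cong refl) (simp add: ui wi)
    also have "\<dots> = (\<Sum>r<d. lam * (\<psi> $ r * cnj (\<psi> $ r)))" using sum_restrict[OF dNN] by simp
    also have "\<dots> = lam * (\<Sum>r<d. \<psi> $ r * cnj (\<psi> $ r))" by (simp add: sum_distrib_left)
    also have "\<dots> = lam * complex_of_real sr" using sumS by simp
    finally show ?thesis .
  qed
  have wp: "w \<bullet>c \<psi> = complex_of_real sr"
    unfolding w_def using P_sa[OF uc pc] P_fix[OF psi] S by simp
  have ww: "w \<bullet>c w = lam * complex_of_real sr"
  proof -
    have "w \<bullet>c w = u \<bullet>c (P *\<^sub>v w)" unfolding w_def using P_sa[OF uc P_c[OF uc]] .
    also have "\<dots> = u \<bullet>c w" using P_fix[OF P_V[OF uc]] unfolding w_def by simp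
    also have "\<dots> = cnj (w \<bullet>c u)" using cprod_cnj[of w u] uc wc by simp
    also have "\<dots> = lam * complex_of_real sr" unfolding wu lamr by simp
    finally show ?thesis .
  qed
  have pw: "\<psi> \<bullet>c w = complex_of_real sr" using cprod_cnj[of w \<psi>] wc pc wp by simp
  have q: "\<And>t. 0 \<le> 1 - 2*t*sr + t^2*lr*sr"
  proof -
    fix t :: real
    have "0 \<le> (\<psi> - complex_of_real t \<cdot>\<^sub>v w) \<bullet>c (\<psi> - complex_of_real t \<cdot>\<^sub>v w)"
      by (rule conjugate_square_ge_0_vec)
    also have "\<dots> = complex_of_real (1 - 2*t*sr + t^2*lr*sr)"
      unfolding cprod_expand[OF pc wc complex_cnj_complex_of_real[of t]] n1 wp pw ww lamr
      by (simp add: power2_eq_square algebra_simps)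
    finally show "0 \<le> 1 - 2*t*sr + t^2*lr*sr" by (simp add: less_eq_complex_def)
  qed
  have le: "sr \<le> lr" by (rule quad[OF sr0 lr0 q])
  show ?thesis unfolding u_def[symmetric] S using le us_props(4) unfolding lr_def by simp
qed

end


theorem proposition16:
  fixes G :: "('g, 'b) monoid_scheme" and H :: "'g set"
    and d :: nat and \<rho> :: "'g \<Rightarrow> complex mat"
    and ts :: "'g list" and V :: "complex vec set" and \<psi> :: "complex vec"
  assumes "group G" and "finite (carrier G)" and "subgroup H G"
    and "unitary_rep G H d \<rho>" and "irreducible_rep H d \<rho>"
    and "left_transversal G H ts"
    and "invariant_subspace (length ts * d) (carrier G) (induced_mat G H ts d \<rho>) V"
    and "\<psi> \<in> V" and "cscalar_prod \<psi> \<psi> = 1"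
  shows "cscalar_prod (proj_e (length ts) d *\<^sub>v \<psi>) \<psi> \<in> \<real> \<and>
         Re (cscalar_prod (proj_e (length ts) d *\<^sub>v \<psi>) \<psi>)
           \<le> real (subspace_dim (length ts * d) V) / real (length ts * d)"
proof -
  have I: "indsetup G H d \<rho> ts V"
    unfolding indsetup_def indsetup_axioms_def using assms by auto
  show ?thesis using indsetup.final[OF I assms(8) assms(9)] .
qed

end
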